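(* Let $\mathcal P$ be a CPOS $2n$-gon and $i$ an index. Suppose the line through $P_i$ and $N(i+\tfrac12)$ meets the line $P_{n+i}P_{n+i+1}$ at a point $P_i'$ belonging to the segment $[P_{n+i},P_{n+i+1}]$. Then $N(i+\tfrac12)$ is the midpoint of the chord $P_iP_i'$, and this chord divides the region bounded by $\mathcal P$ into two regions of equal area.
   Context: A CPOS $2n$-gon ($n\ge2$) is a closed planar polygon $\mathcal P$ with vertices $P_1,\dots,P_{2n}$ (indices mod $2n$) bounding a convex region, with no two adjacent sides parallel, with $P_{i+n+1}-P_{i+n}$ parallel to $P_{i+1}-P_i$ for all $i$, and positively oriented: $[P_{i+1}-P_i,P_{j+1}-P_j]>0$ for $1\le i<j\le n$ ($[\cdot,\cdot]$ = determinant). $M_i=\tfrac12(P_i+P_{i+n})$; the mid-parallel line $m(i+\tfrac12)$ is the line through $M_i$ parallel to $P_{i+1}-P_i$. $A_i^+$ is the area of the polygon $P_iP_{i+1}\cdots P_{i+n}$ and $A_i^-$ the area of the polygon $P_{i+n}P_{i+n+1}\cdots P_{i+2n}$. $N(i+\tfrac12)$ is the unique point of $m(i+\tfrac12)$ with $[N(i+\tfrac12)-M_i,\,P_{i+n}-P_i]=\tfrac12(A_i^+-A_i^-)$. *)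

theory Defs
  imports "HOL-Analysis.Analysis"
begin

type_synonym pt = "real \<times> real"

definition det2 :: "pt \<Rightarrow> pt \<Rightarrow> real" where
  "det2 u v = fst u * snd v - snd u * fst v"

text \<open>Side vector P(k+1) - P(k) of a polygon with vertex function P (indices taken in nat,
  the vertex function being 2n-periodic).\<close>
definition side :: "(nat \<Rightarrow> pt) \<Rightarrow> nat \<Rightarrow> pt" where
  "side P k = P (Suc k) - P k"

text \<open>CPOS 2n-gon: periodic vertex function, convex (every vertex weakly to the left of every
  directed side line), no two adjacent sides parallel, opposite sides parallel,
  positively oriented.\<close>
definition cpos :: "(nat \<Rightarrow> pt) \<Rightarrow> nat \<Rightarrow> bool" where
  "cpos P n \<longleftrightarrow>
     n \<ge> 2 \<and>
     (\<forall>k. P (k + 2 * n) = P k) \<and>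
     (\<forall>k j. det2 (side P k) (P j - P k) \<ge> 0) \<and>
     (\<forall>k. det2 (side P k) (side P (Suc k)) \<noteq> 0) \<and>
     (\<forall>k. det2 (side P (k + n)) (side P k) = 0) \<and>
     (\<forall>i j. 1 \<le> i \<and> i < j \<and> j \<le> n \<longrightarrow> det2 (side P i) (side P j) > 0)"

definition poly_area :: "pt list \<Rightarrow> real" where
  "poly_area vs = \<bar>\<Sum>k<length vs. det2 (vs ! k) (vs ! ((k + 1) mod length vs))\<bar> / 2"

definition A_plus :: "(nat \<Rightarrow> pt) \<Rightarrow> nat \<Rightarrow> nat \<Rightarrow> real" where
  "A_plus P n i = poly_area (map (\<lambda>k. P (i + k)) [0..<n + 1])"

definition A_minus :: "(nat \<Rightarrow> pt) \<Rightarrow> nat \<Rightarrow> nat \<Rightarrow> real" where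
  "A_minus P n i = poly_area (map (\<lambda>k. P (i + n + k)) [0..<n + 1])"

definition Mpt :: "(nat \<Rightarrow> pt) \<Rightarrow> nat \<Rightarrow> nat \<Rightarrow> pt" where
  "Mpt P n i = midpoint (P i) (P (i + n))"

definition midline :: "(nat \<Rightarrow> pt) \<Rightarrow> nat \<Rightarrow> nat \<Rightarrow> pt set" where
  "midline P n i = {Mpt P n i + t *\<^sub>R side P i | t. True}"

definition Npt :: "(nat \<Rightarrow> pt) \<Rightarrow> nat \<Rightarrow> nat \<Rightarrow> pt" where
  "Npt P n i = (THE X. X \<in> midline P n i \<and>
      det2 (X - Mpt P n i) (P (i + n) - P i) = (A_plus P n i - A_minus P n i) / 2)"

end

theory Submission
  imports Defs
begin

lemma det2_scaleR_left [simp]: "det2 (c *\<^sub>R u) v = c * det2 u v"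
  by (simp add: det2_def algebra_simps)
lemma det2_scaleR_right [simp]: "det2 u (c *\<^sub>R v) = c * det2 u v"
  by (simp add: det2_def algebra_simps)
lemma det2_add_right: "det2 u (v + w) = det2 u v + det2 u w"
  by (simp add: det2_def algebra_simps)
lemma det2_diff_right: "det2 u (v - w) = det2 u v - det2 u w"
  by (simp add: det2_def algebra_simps)
lemma det2_diff_left: "det2 (v - w) u = det2 v u - det2 w u"
  by (simp add: det2_def algebra_simps)
lemma det2_self [simp]: "det2 u u = 0"
  by (simp add: det2_def algebra_simps)
lemma det2_swap: "det2 v u = - det2 u v"
  by (simp add: det2_def algebra_simps)
lemma det2_zero_left [simp]: "det2 0 u = 0"
  by (simp add: det2_def)

lemma par_lemma:
  assumes "det2 v u = 0" "u \<noteq> 0"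
  shows "\<exists>d. v = d *\<^sub>R u"
proof -
  obtain a b where u: "u = (a, b)" by force
  obtain c e where v: "v = (c, e)" by force
  have h: "c * b - e * a = 0" using assms(1) by (simp add: u v det2_def)
  show ?thesis
  proof (cases "a = 0")
    case True
    then have "b \<noteq> 0" using assms(2) u by (auto simp: zero_prod_def)
    then have "c = 0" using h True by simp
    then have "v = (e / b) *\<^sub>R u" using True \<open>b \<noteq> 0\<close> by (simp add: u v)
    then show ?thesis by blast
  next
    case False
    have "e = c / a * b" using h False by (simp add: field_simps)
    then have "v = (c / a) *\<^sub>R u" using False by (simp add: u v)
    then show ?thesis by blast
  qed
qed

lemma cpos_turn:
  assumes "cpos P n"
  shows "det2 (side P k) (side P (Suc k)) > 0"
proof -
  have c: "det2 (side P k) (P (k + 2) - P k) \<ge> 0" using assms unfolding cpos_def by blast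
  have "P (k + 2) - P k = side P k + side P (Suc k)" by (simp add: side_def)
  then have "det2 (side P k) (side P (Suc k)) \<ge> 0" using c by (simp add: det2_add_right)
  moreover have "det2 (side P k) (side P (Suc k)) \<noteq> 0" using assms unfolding cpos_def by blast
  ultimately show ?thesis by linarith
qed

lemma cpos_side_nz:
  assumes "cpos P n" shows "side P k \<noteq> 0"
  using cpos_turn[OF assms, of k] by auto

lemma cpos_par:
  assumes "cpos P n" shows "\<exists>d. side P (k + n) = d *\<^sub>R side P k"
  using par_lemma[of "side P (k+n)" "side P k"] assms cpos_side_nz[OF assms, of k]
  unfolding cpos_def by blast

lemma cpos_opp_Suc:
  assumes "cpos P n" shows "\<exists>c<0. side P (Suc m + n) = c *\<^sub>R side P (Suc m)"
proof (induction m)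
  case 0
  obtain d where d: "side P (1 + n) = d *\<^sub>R side P 1" using cpos_par[OF assms, of 1] by blast
  have t: "det2 (side P n) (side P (Suc n)) > 0" by (rule cpos_turn[OF assms])
  have p: "det2 (side P 1) (side P n) > 0" using assms unfolding cpos_def by auto
  have "side P (Suc n) = d *\<^sub>R side P 1" using d by simp
  then have "d * det2 (side P n) (side P 1) > 0" using t by simp
  then have "d * det2 (side P 1) (side P n) < 0" by (subst (asm) det2_swap) simp
  then have "d < 0" using p by (simp add: mult_less_0_iff)
  then show ?case using d by auto
next
  case (Suc m)
  then obtain c where c: "c < 0" "side P (Suc m + n) = c *\<^sub>R side P (Suc m)" by blast
  obtain d where d: "side P (Suc (Suc m) + n) = d *\<^sub>R side P (Suc (Suc m))"
    using cpos_par[OF assms, of "Suc (Suc m)"] by blast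
  have t: "det2 (side P (Suc m + n)) (side P (Suc (Suc m + n))) > 0" by (rule cpos_turn[OF assms])
  have t2: "det2 (side P (Suc m)) (side P (Suc (Suc m))) > 0" by (rule cpos_turn[OF assms])
  have "c * (d * det2 (side P (Suc m)) (side P (Suc (Suc m)))) > 0" using t c d by (simp add: mult.left_commute)
  then have "(c * d) * det2 (side P (Suc m)) (side P (Suc (Suc m))) > 0" by (simp add: mult.assoc)
  then have "c * d > 0" using t2 by (simp add: zero_less_mult_iff)
  then have "d < 0" using c(1) by (simp add: zero_less_mult_iff)
  then show ?case using d by blast
qed

lemma cpos_opp:
  assumes "cpos P n" shows "\<exists>c<0. side P (k + n) = c *\<^sub>R side P k"
proof (cases k)
  case (Suc m) then show ?thesis using cpos_opp_Suc[OF assms] by blast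
next
  case 0
  have n2: "n \<ge> 2" using assms unfolding cpos_def by blast
  have per: "\<And>k. P (k + 2 * n) = P k" using assms unfolding cpos_def by blast
  obtain m where m: "2 * n = Suc m" using n2 by (cases "2*n") auto
  obtain c where c: "c < 0" "side P (Suc m + n) = c *\<^sub>R side P (Suc m)"
    using cpos_opp_Suc[OF assms, of m] by blast
  have e1: "side P (Suc m + n) = side P n"
    using per[of n] per[of "Suc n"] unfolding side_def m[symmetric] by (simp add: add.commute)
  have e2: "side P (Suc m) = side P 0"
    using per[of 0] per[of 1] unfolding side_def m[symmetric] by (simp add: add.commute)
  have "side P (0 + n) = c *\<^sub>R side P 0" using c e1 e2 by simp
  then show ?thesis using 0 c(1) by blast
qed

lemma cpos_D0:
  assumes "cpos P n" shows "det2 (side P i) (P (i + n) - P i) > 0"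
proof -
  have ge: "det2 (side P i) (P (i + n) - P i) \<ge> 0" using assms unfolding cpos_def by blast
  show ?thesis
  proof (rule ccontr)
    assume "\<not> ?thesis"
    then have z: "det2 (side P i) (P (i + n) - P i) = 0" using ge by linarith
    obtain c where c: "c < 0" "side P (i + n) = c *\<^sub>R side P i" using cpos_opp[OF assms] by blast
    have cv: "det2 (side P (i + n)) (P (i + 2) - P (i + n)) \<ge> 0" using assms unfolding cpos_def by blast
    have e: "P (i + 2) - P (i + n) = (side P i + side P (Suc i)) - (P (i + n) - P i)"
      by (simp add: side_def)
    have "det2 (side P (i + n)) (P (i + 2) - P (i + n)) = c * det2 (side P i) (side P (Suc i))"
      using z c(2) e by (simp add: det2_diff_right det2_add_right)
    moreover have "c * det2 (side P i) (side P (Suc i)) < 0"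
      using c(1) cpos_turn[OF assms, of i] by (simp add: mult_neg_pos)
    ultimately show False using cv by linarith
  qed
qed

definition ssum :: "pt list \<Rightarrow> real" where
  "ssum vs = (\<Sum>k<length vs. det2 (vs ! k) (vs ! ((k + 1) mod length vs)))"

lemma poly_area_ssum: "poly_area vs = \<bar>ssum vs\<bar> / 2"
  by (simp add: poly_area_def ssum_def)

lemma ssum_map: "ssum (map f [0..<Suc m]) = (\<Sum>k<m. det2 (f k) (f (Suc k))) + det2 (f m) (f 0)"
proof -
  have "ssum (map f [0..<Suc m]) = (\<Sum>k<Suc m. det2 (f k) (f ((k + 1) mod Suc m)))"
    unfolding ssum_def length_map length_upt diff_zero
  proof (intro sum.cong refl)
    fix x assume x: "x \<in> {..<Suc m}"
    have "(x + 1) mod Suc m < Suc m" by simp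
    then show "det2 (map f [0..<Suc m] ! x) (map f [0..<Suc m] ! ((x + 1) mod Suc m)) =
         det2 (f x) (f ((x + 1) mod Suc m))"
      using x by (simp del: upt_Suc add: nth_map_upt)
  qed
  also have "\<dots> = (\<Sum>k<m. det2 (f k) (f ((k + 1) mod Suc m))) + det2 (f m) (f 0)"
    by simp
  also have "(\<Sum>k<m. det2 (f k) (f ((k + 1) mod Suc m))) = (\<Sum>k<m. det2 (f k) (f (Suc k)))"
    by (intro sum.cong) auto
  finally show ?thesis .
qed

lemma fan_aux: "(\<Sum>k<m. det2 (f k - a) (f (Suc k) - a)) =
   (\<Sum>k<m. det2 (f k) (f (Suc k))) + det2 a (f 0) - det2 a (f m)"
  by (induction m) (simp_all add: det2_def algebra_simps)

lemma fan: "(\<Sum>k<m. det2 (f k) (f (Suc k))) + det2 (f m) (f 0) =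
   (\<Sum>k<m. det2 (f k - f 0) (f (Suc k) - f 0))"
  using fan_aux[of f "f 0" m] det2_swap[of "f 0" "f m"] by simp

lemma cpos_fan_nonneg:
  assumes "cpos P n"
  shows "ssum (map (\<lambda>k. P (b + k)) [0..<Suc m]) \<ge> 0"
proof -
  have "ssum (map (\<lambda>k. P (b + k)) [0..<Suc m]) =
     (\<Sum>k<m. det2 (P (b + k) - P b) (P (b + Suc k) - P b))"
    using ssum_map[of "\<lambda>k. P (b + k)" m] fan[of "\<lambda>k. P (b + k)" m] by simp
  also have "\<dots> \<ge> 0"
  proof (rule sum_nonneg)
    fix k
    have "det2 (P (b + k) - P b) (P (b + Suc k) - P b) = det2 (side P (b + k)) (P b - P (b + k))"
      by (simp add: side_def det2_def algebra_simps)
    also have "\<dots> \<ge> 0" using assms unfolding cpos_def by blast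
    finally show "det2 (P (b + k) - P b) (P (b + Suc k) - P b) \<ge> 0" .
  qed
  finally show ?thesis .
qed

lemma collinear_identity:
  assumes "Q = (1 - u) *\<^sub>R a + u *\<^sub>R b"
  shows "det2 Q b + det2 p Q - det2 a b - det2 p a = - det2 (a - p) (Q - p)"
  unfolding assms by (simp add: det2_def algebra_simps)

theorem mainTheorem10:
  fixes P :: "nat \<Rightarrow> real \<times> real" and n i :: nat and Q :: "real \<times> real"
  assumes "cpos P n"
    and "Q \<in> {P i + t *\<^sub>R (Npt P n i - P i) | t. True}"
    and "Q \<in> closed_segment (P (n + i)) (P (n + i + 1))"
  shows "Npt P n i = midpoint (P i) Q \<and>
         poly_area (map (\<lambda>k. P (i + k)) [0..<n + 1] @ [Q]) =
         poly_area (Q # map (\<lambda>k. P (n + i + 1 + k)) [0..<n])"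
proof -
  have cp: "cpos P n" by fact
  have n2: "n \<ge> 2" using cp unfolding cpos_def by blast
  have per: "\<And>k. P (k + 2 * n) = P k" using cp unfolding cpos_def by blast
  have ni: "n + i = i + n" by simp
  define D0 where "D0 = det2 (side P i) (P (i + n) - P i)"
  have D0: "D0 > 0" unfolding D0_def by (rule cpos_D0[OF cp])
  define Sp where "Sp = ssum (map (\<lambda>k. P (i + k)) [0..<Suc n])"
  define Sm where "Sm = ssum (map (\<lambda>k. P (i + n + k)) [0..<Suc n])"
  have Sp0: "Sp \<ge> 0" unfolding Sp_def by (rule cpos_fan_nonneg[OF cp])
  have Sm0: "Sm \<ge> 0" unfolding Sm_def by (rule cpos_fan_nonneg[OF cp])
  have Ap: "A_plus P n i = Sp / 2" using Sp0 by (simp add: A_plus_def poly_area_ssum Sp_def)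
  have Am: "A_minus P n i = Sm / 2" using Sm0 by (simp add: A_minus_def poly_area_ssum Sm_def)
  define c0 where "c0 = (A_plus P n i - A_minus P n i) / 2"
  define M where "M = Mpt P n i"
  define s where "s = c0 / D0"
  have N: "Npt P n i = M + s *\<^sub>R side P i"
    unfolding Npt_def
  proof (rule the_equality)
    show "M + s *\<^sub>R side P i \<in> midline P n i \<and>
      det2 (M + s *\<^sub>R side P i - Mpt P n i) (P (i + n) - P i) = (A_plus P n i - A_minus P n i) / 2"
    proof
      show "M + s *\<^sub>R side P i \<in> midline P n i" unfolding midline_def M_def by blast
      have "det2 (M + s *\<^sub>R side P i - Mpt P n i) (P (i + n) - P i) = s * D0"
        by (simp add: M_def D0_def)
      also have "\<dots> = c0" using D0 by (simp add: s_def)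
      finally show "det2 (M + s *\<^sub>R side P i - Mpt P n i) (P (i + n) - P i) = (A_plus P n i - A_minus P n i) / 2"
        by (simp add: c0_def)
    qed
  next
    fix X assume X: "X \<in> midline P n i \<and>
      det2 (X - Mpt P n i) (P (i + n) - P i) = (A_plus P n i - A_minus P n i) / 2"
    then obtain t where t: "X = M + t *\<^sub>R side P i" unfolding midline_def M_def by blast
    have "t * D0 = c0" using X by (simp add: t M_def D0_def c0_def)
    then have "t = s" using D0 by (simp add: s_def field_simps)
    then show "X = M + s *\<^sub>R side P i" using t by simp
  qed
  have NP: "Npt P n i - P i = (1/2) *\<^sub>R (P (i + n) - P i) + s *\<^sub>R side P i"
    by (simp add: N M_def Mpt_def midpoint_def prod_eq_iff algebra_simps)
  obtain t where t: "Q = P i + t *\<^sub>R (Npt P n i - P i)" using assms(2) by blast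
  obtain u where u: "Q = (1 - u) *\<^sub>R P (i + n) + u *\<^sub>R P (i + n + 1)"
    using assms(3) unfolding closed_segment_def ni by blast
  obtain c where c: "c < 0" "side P (i + n) = c *\<^sub>R side P i" using cpos_opp[OF cp] by blast
  have "Q - P (i + n) = u *\<^sub>R side P (i + n)"
    using u by (simp add: side_def algebra_simps)
  then have z: "det2 (side P i) (Q - P (i + n)) = 0" using c by simp
  have "Q - P i = (Q - P (i + n)) + (P (i + n) - P i)" by simp
  then have d1: "det2 (side P i) (Q - P i) = D0" using z by (simp add: det2_diff_right D0_def)
  have "det2 (side P i) (Q - P i) = t * (D0 / 2)"
    using t NP by (simp add: det2_add_right D0_def)
  then have t2: "t = 2" using d1 D0 by (simp add: field_simps)
  have mid: "Npt P n i = midpoint (P i) Q"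
    using t t2 by (simp add: midpoint_def prod_eq_iff algebra_simps)
  define D where "D = det2 (P (i + n) - P i) (Q - P i)"
  have QP: "Q - P i = (P (i + n) - P i) + (2 * s) *\<^sub>R side P i"
    using t t2 NP by (simp add: algebra_simps)
  have "D = 2 * s * det2 (P (i + n) - P i) (side P i)"
    unfolding D_def QP by (simp add: det2_add_right)
  also have "\<dots> = - 2 * s * D0" unfolding D0_def by (subst det2_swap) simp
  also have "\<dots> = - 2 * c0" using D0 by (simp add: s_def)
  finally have Dv: "D = (Sm - Sp) / 2" by (simp add: c0_def Ap Am)
  define h where "h = (\<lambda>k. if k \<le> n then P (i + k) else Q)"
  have l1: "map (\<lambda>k. P (i + k)) [0..<n + 1] @ [Q] = map h [0..<Suc (Suc n)]"
  proof -
    have "map h [0..<Suc n] = map (\<lambda>k. P (i + k)) [0..<Suc n]"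
      by (intro map_cong refl) (auto simp: h_def)
    moreover have e: "[0..<Suc (Suc n)] = [0..<Suc n] @ [Suc n]" by simp
    moreover have "h (Suc n) = Q" by (simp add: h_def)
    ultimately show ?thesis by (simp del: upt_Suc)
  qed
  have "ssum (map h [0..<Suc (Suc n)]) = (\<Sum>k<Suc n. det2 (h k) (h (Suc k))) + det2 (h (Suc n)) (h 0)"
    by (rule ssum_map)
  also have "\<dots> = (\<Sum>k<n. det2 (h k) (h (Suc k))) + det2 (P (i + n)) Q + det2 Q (P i)"
    by (simp add: h_def)
  also have "(\<Sum>k<n. det2 (h k) (h (Suc k))) = (\<Sum>k<n. det2 (P (i + k)) (P (i + Suc k)))"
    by (intro sum.cong) (auto simp: h_def)
  finally have s1: "ssum (map h [0..<Suc (Suc n)]) =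
      (\<Sum>k<n. det2 (P (i + k)) (P (i + Suc k))) + det2 (P (i + n)) Q + det2 Q (P i)" .
  have sp: "Sp = (\<Sum>k<n. det2 (P (i + k)) (P (i + Suc k))) + det2 (P (i + n)) (P i)"
    unfolding Sp_def using ssum_map[of "\<lambda>k. P (i + k)" n] by simp
  have S1: "ssum (map h [0..<Suc (Suc n)]) = Sp + D"
    unfolding s1 sp D_def by (simp add: det2_def algebra_simps)
  obtain n' where n': "n = Suc n'" using n2 by (cases n) auto
  have shift: "\<And>F::nat\<Rightarrow>real. (\<Sum>k<n. F k) = F 0 + (\<Sum>k<n'. F (Suc k))"
    unfolding n' by (rule sum.lessThan_Suc_shift)
  define h2 where "h2 = (\<lambda>k. if k = 0 then Q else P (i + n + k))"
  have l2: "Q # map (\<lambda>k. P (n + i + 1 + k)) [0..<n] = map h2 [0..<Suc n]"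
  proof (rule nth_equalityI)
    show "length (Q # map (\<lambda>k. P (n + i + 1 + k)) [0..<n]) = length (map h2 [0..<Suc n])" by simp
    fix k assume "k < length (Q # map (\<lambda>k. P (n + i + 1 + k)) [0..<n])"
    then have k: "k < Suc n" by simp
    show "(Q # map (\<lambda>k. P (n + i + 1 + k)) [0..<n]) ! k = map h2 [0..<Suc n] ! k"
    proof (cases k)
      case 0 then show ?thesis by (simp del: upt_Suc add: nth_map_upt h2_def)
    next
      case (Suc k') then show ?thesis using k
        by (simp del: upt_Suc add: nth_map_upt h2_def algebra_simps)
    qed
  qed
  have "ssum (map h2 [0..<Suc n]) = (\<Sum>k<n. det2 (h2 k) (h2 (Suc k))) + det2 (h2 n) (h2 0)"
    by (rule ssum_map)
  also have "\<dots> = det2 Q (P (i + n + 1)) + (\<Sum>k<n'. det2 (P (i + n + Suc k)) (P (i + n + Suc (Suc k))))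
      + det2 (P (i + n + n)) Q"
    unfolding shift using n2 by (simp add: h2_def)
  finally have s2: "ssum (map h2 [0..<Suc n]) = det2 Q (P (i + n + 1)) +
      (\<Sum>k<n'. det2 (P (i + n + Suc k)) (P (i + n + Suc (Suc k)))) + det2 (P (i + n + n)) Q" .
  have sm: "Sm = det2 (P (i + n)) (P (i + n + 1)) +
      (\<Sum>k<n'. det2 (P (i + n + Suc k)) (P (i + n + Suc (Suc k)))) + det2 (P (i + n + n)) (P (i + n))"
    unfolding Sm_def ssum_map unfolding shift by simp
  have pin: "P (i + n + n) = P i" using per[of i] by (simp add: add.assoc mult_2)
  have S2: "ssum (map h2 [0..<Suc n]) = Sm - D"
    unfolding s2 sm pin D_def using collinear_identity[OF u, of "P i"] by simp
  have "poly_area (map (\<lambda>k. P (i + k)) [0..<n + 1] @ [Q]) =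
         poly_area (Q # map (\<lambda>k. P (n + i + 1 + k)) [0..<n])"
    unfolding l1 l2 poly_area_ssum S1 S2 Dv
    by (rule arg_cong[where f="\<lambda>x. \<bar>x\<bar> / 2"]) (simp add: field_simps)
  with mid show ?thesis by blast
qed

end
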